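(* Let $H$ be a group and let $A$ be either the empty set or a normal subgroup of $H$. For $1\leq l\leq m$ let $\mathcal E_{l,m}$ be the subgroup of $H$ generated by all elements $[x_1,\ldots,x_i]^{2^{m-i-k}}$ with $l\leq i\leq m$, $x_1,\ldots,x_i\in H$, $0\leq k\leq m-i$, such that there exist indices $1\leq j_1<\cdots<j_k\leq i$ with $x_{j_1},\ldots,x_{j_k}\in A$ (call these elements generators of $\mathcal E_{l,m}$); when $A=\varnothing$ (so only $k=0$ occurs) write $\widetilde{\mathcal E}_{l,m}$. Let $m\geq1$, $1\leq i\leq m$, $y\in H$, and let $x=[x_1,\ldots,x_i]\in\Gamma_i(H)$ be such that $x^{2^{m-i-k}}$ is a generator of $\mathcal E_{i,m}$ for some $0\leq k\leq m-i$. Then $$[x^{2^{m-i-k}},y]\equiv [x,y]^{2^{m-i-k}}\pmod{\mathcal E_{i+1,m+1}}.$$ In particular, if $x^{2^{m-i}}$ is a generator of $\widetilde{\mathcal E}_{i,m}$, then $[x^{2^{m-i}},y]\equiv[x,y]^{2^{m-i}}\pmod{\widetilde{\mathcal E}_{i+1,m+1}}$.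
   Context: $[a,b]=aba^{-1}b^{-1}$; right-normed iterated commutators $[x_1,\ldots,x_n]=[x_1,[x_2,\ldots,[x_{n-1},x_n]]]$ (with $[x_1]=x_1$); $\Gamma_1(H)=H$, $\Gamma_{i+1}(H)=[\Gamma_i(H),H]$. Each $\mathcal E_{l,m}$ is normal in $H$. Congruence modulo a normal subgroup $N$ means equality of $N$-cosets. *)

theory Defs
  imports "HOL-Algebra.Algebra"
begin

definition gcomm :: "('a, 'b) monoid_scheme \<Rightarrow> 'a \<Rightarrow> 'a \<Rightarrow> 'a" where
  "gcomm G a b = a \<otimes>\<^bsub>G\<^esub> b \<otimes>\<^bsub>G\<^esub> inv\<^bsub>G\<^esub> a \<otimes>\<^bsub>G\<^esub> inv\<^bsub>G\<^esub> b"

text \<open>Right-normed iterated commutator [x1,...,xn] = [x1,[x2,...,[x(n-1),xn]]], [x1] = x1.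
  (The value on the empty list is irrelevant; it is never used.)\<close>
fun rcomm :: "('a, 'b) monoid_scheme \<Rightarrow> 'a list \<Rightarrow> 'a" where
  "rcomm G [] = \<one>\<^bsub>G\<^esub>"
| "rcomm G [x] = x"
| "rcomm G (x # xs) = gcomm G x (rcomm G xs)"

text \<open>Generators of E_{l,m}: [x1,...,xi]^(2^(m-i-k)) with l <= i <= m, k <= m-i and
  k distinct positions (0-indexed) whose entries lie in A.\<close>
definition Egens :: "('a, 'b) monoid_scheme \<Rightarrow> 'a set \<Rightarrow> nat \<Rightarrow> nat \<Rightarrow> 'a set" where
  "Egens G A l m = {rcomm G xs [^]\<^bsub>G\<^esub> ((2::nat) ^ (m - length xs - k)) | xs k.
      l \<le> length xs \<and> length xs \<le> m \<and> set xs \<subseteq> carrier G \<and> k \<le> m - length xs \<and>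
      (\<exists>J. J \<subseteq> {0..<length xs} \<and> card J = k \<and> (\<forall>j\<in>J. xs ! j \<in> A))}"

definition Egrp :: "('a, 'b) monoid_scheme \<Rightarrow> 'a set \<Rightarrow> nat \<Rightarrow> nat \<Rightarrow> 'a set" where
  "Egrp G A l m = generate G (Egens G A l m)"

end

theory Submission imports Defs begin

context group begin

lemma cancel1[simp]: "x \<in> carrier G \<Longrightarrow> y \<in> carrier G \<Longrightarrow> x \<otimes> (inv x \<otimes> y) = y"
  by (simp add: m_assoc[symmetric])
lemma cancel2[simp]: "x \<in> carrier G \<Longrightarrow> y \<in> carrier G \<Longrightarrow> inv x \<otimes> (x \<otimes> y) = y"
  by (simp add: m_assoc[symmetric])

lemma gcomm_closed[simp]: "a \<in> carrier G \<Longrightarrow> b \<in> carrier G \<Longrightarrow> gcomm G a b \<in> carrier G"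
  by (simp add: gcomm_def)

lemma gcomm_inv: "a \<in> carrier G \<Longrightarrow> b \<in> carrier G \<Longrightarrow> inv (gcomm G a b) = gcomm G b a"
  by (simp add: gcomm_def m_assoc inv_mult_group)

lemma gcomm_conj: "g \<in> carrier G \<Longrightarrow> a \<in> carrier G \<Longrightarrow> b \<in> carrier G \<Longrightarrow>
   g \<otimes> gcomm G a b \<otimes> inv g = gcomm G (g \<otimes> a \<otimes> inv g) (g \<otimes> b \<otimes> inv g)"
  by (simp add: gcomm_def m_assoc inv_mult_group)

lemma pow_conj: assumes "g \<in> carrier G" "x \<in> carrier G" shows
   "g \<otimes> x [^] (n::nat) \<otimes> inv g = (g \<otimes> x \<otimes> inv g) [^] n"
proof (induction n)
  case 0 then show ?case using assms by simp
next
  case (Suc n)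
  have "(g \<otimes> x \<otimes> inv g) [^] Suc n = (g \<otimes> x [^] n \<otimes> inv g) \<otimes> (g \<otimes> x \<otimes> inv g)"
    by (simp only: nat_pow_Suc Suc.IH)
  also have "\<dots> = g \<otimes> x [^] Suc n \<otimes> inv g"
    using assms by (simp add: m_assoc)
  finally show ?case by simp
qed

lemma gcomm_mult_right: "h \<in> carrier G \<Longrightarrow> a \<in> carrier G \<Longrightarrow> b \<in> carrier G \<Longrightarrow>
   gcomm G h (a \<otimes> b) = gcomm G h a \<otimes> (a \<otimes> gcomm G h b \<otimes> inv a)"
  by (simp add: gcomm_def m_assoc inv_mult_group)

lemma gcomm_inv_right: "h \<in> carrier G \<Longrightarrow> a \<in> carrier G \<Longrightarrow>
   gcomm G h (inv a) = inv a \<otimes> inv (gcomm G h a) \<otimes> inv (inv a)"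
  by (simp add: gcomm_def m_assoc inv_mult_group)

lemma sq_mult: "a \<in> carrier G \<Longrightarrow> b \<in> carrier G \<Longrightarrow>
   (a \<otimes> b) \<otimes> (a \<otimes> b) = (a \<otimes> a) \<otimes> gcomm G (inv a) b \<otimes> (b \<otimes> b)"
  by (simp add: gcomm_def m_assoc inv_mult_group)

lemma gcomm_sq: "g \<in> carrier G \<Longrightarrow> p \<in> carrier G \<Longrightarrow>
   gcomm G g (p \<otimes> p) = gcomm G g p \<otimes> (gcomm G p (gcomm G g p) \<otimes> (gcomm G g p \<otimes> gcomm G g p)) \<otimes> inv (gcomm G g p)"
  by (simp add: gcomm_def m_assoc inv_mult_group)

lemma gen_conj:
  assumes S: "S \<subseteq> carrier G" and cl: "\<And>g s. g \<in> carrier G \<Longrightarrow> s \<in> S \<Longrightarrow> g \<otimes> s \<otimes> inv g \<in> S"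
    and g: "g \<in> carrier G" and u: "u \<in> generate G S"
  shows "g \<otimes> u \<otimes> inv g \<in> generate G S"
  using u
proof induction
  case one then show ?case using g by (simp add: generate.one)
next
  case (incl h) then show ?case using cl g by (simp add: generate.incl)
next
  case (inv h)
  have hc: "h \<in> carrier G" using inv S by auto
  have "g \<otimes> inv h \<otimes> inv g = inv (g \<otimes> h \<otimes> inv g)" using hc g by (simp add: m_assoc inv_mult_group)
  then show ?case using generate.inv[OF cl[OF g inv]] by simp
next
  case (eng h1 h2)
  have c: "h1 \<in> carrier G" "h2 \<in> carrier G" using eng generate_in_carrier[OF S] by auto
  have "g \<otimes> (h1 \<otimes> h2) \<otimes> inv g = (g \<otimes> h1 \<otimes> inv g) \<otimes> (g \<otimes> h2 \<otimes> inv g)" using c g by (simp add: m_assoc)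
  then show ?case using generate.eng[OF eng(3,4)] by simp
qed

lemma subgroup_pow_closed: "subgroup H G \<Longrightarrow> x \<in> H \<Longrightarrow> x [^] (n::nat) \<in> H"
  by (induction n) (auto simp: subgroup.one_closed subgroup.m_closed)

end

definition Ugens :: "('a, 'b) monoid_scheme \<Rightarrow> (nat \<Rightarrow> 'a set) \<Rightarrow> nat \<Rightarrow> nat \<Rightarrow> 'a set" where
  "Ugens G C s0 a = {q [^]\<^bsub>G\<^esub> ((2::nat) ^ b) | q s b. q \<in> C s \<and> s0 \<le> s \<and> b \<le> a \<and> s0 + a \<le> s + b}"

locale cfam = group +
  fixes C :: "nat \<Rightarrow> 'a set"
  assumes C_carr: "C s \<subseteq> carrier G"
    and C_conj: "g \<in> carrier G \<Longrightarrow> c \<in> C s \<Longrightarrow> g \<otimes> c \<otimes> inv g \<in> C s"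
    and C_comm: "g \<in> carrier G \<Longrightarrow> c \<in> C s \<Longrightarrow> gcomm G g c \<in> C (Suc s)"
begin

abbreviation U where "U s0 a \<equiv> generate G (Ugens G C s0 a)"

lemma Ugens_carr: "Ugens G C s0 a \<subseteq> carrier G"
  using C_carr unfolding Ugens_def by auto

lemma Ugens_conj: "g \<in> carrier G \<Longrightarrow> u \<in> Ugens G C s0 a \<Longrightarrow> g \<otimes> u \<otimes> inv g \<in> Ugens G C s0 a"
  unfolding Ugens_def
proof clarify
  fix q s b assume g: "g \<in> carrier G" and q: "q \<in> C s" "s0 \<le> s" "b \<le> a" "s0 + a \<le> s + b"
  have qc: "q \<in> carrier G" using q C_carr by auto
  have "g \<otimes> q [^] ((2::nat)^b) \<otimes> inv g = (g \<otimes> q \<otimes> inv g) [^] ((2::nat)^b)"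
    using pow_conj[OF g qc] by simp
  then show "\<exists>q' s' b'. g \<otimes> q [^] ((2::nat)^b) \<otimes> inv g = q' [^] ((2::nat)^b') \<and> q' \<in> C s' \<and> s0 \<le> s' \<and> b' \<le> a \<and> s0 + a \<le> s' + b'"
    using C_conj[OF g q(1)] q by blast
qed

lemma U_sub: "subgroup (U s0 a) G"
  by (rule generate_is_subgroup[OF Ugens_carr])

lemma U_carr: "u \<in> U s0 a \<Longrightarrow> u \<in> carrier G"
  using generate_in_carrier[OF Ugens_carr] by blast

lemma U_conj: "g \<in> carrier G \<Longrightarrow> u \<in> U s0 a \<Longrightarrow> g \<otimes> u \<otimes> inv g \<in> U s0 a"
  by (rule gen_conj[OF Ugens_carr Ugens_conj])

lemma Ugens_mono: "s0 \<le> s \<Longrightarrow> b \<le> a \<Longrightarrow> s0 + a \<le> s + b \<Longrightarrow> Ugens G C (Suc s) b \<subseteq> Ugens G C s0 (Suc a)"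
  unfolding Ugens_def by (clarify, (rule exI)+, auto)

definition Phi where
  "Phi a \<longleftrightarrow> (\<forall>t c g. c \<in> C t \<longrightarrow> g \<in> carrier G \<longrightarrow> gcomm G g (c [^] ((2::nat)^a)) \<in> U (Suc t) a)"

lemma comm_gen:
  assumes P: "\<And>b. b \<le> a \<Longrightarrow> Phi b" and h: "h \<in> carrier G" and w: "w \<in> Ugens G C s0 a"
  shows "gcomm G h w \<in> U s0 (Suc a)"
proof -
  obtain q s b where q: "w = q [^] ((2::nat)^b)" "q \<in> C s" "s0 \<le> s" "b \<le> a" "s0 + a \<le> s + b"
    using w unfolding Ugens_def by blast
  have "gcomm G h w \<in> U (Suc s) b" using P[OF q(4)] q h unfolding Phi_def by blast
  then show ?thesis using mono_generate[OF Ugens_mono[OF q(3-5)]] by blast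
qed

lemma comm_U:
  assumes P: "\<And>b. b \<le> a \<Longrightarrow> Phi b" and h: "h \<in> carrier G" and v: "v \<in> U s0 a"
  shows "gcomm G h v \<in> U s0 (Suc a)"
  using v
proof induction
  case one
  have "gcomm G h \<one> = \<one>" using h by (simp add: gcomm_def)
  then show ?case by (simp add: generate.one)
next
  case (incl w) then show ?case using comm_gen[OF P h] by blast
next
  case (inv w)
  have wc: "w \<in> carrier G" using inv Ugens_carr by auto
  have c: "gcomm G h w \<in> U s0 (Suc a)" using comm_gen[OF P h inv] by blast
  have "inv (gcomm G h w) \<in> U s0 (Suc a)" using subgroup.m_inv_closed[OF U_sub c] .
  then have "inv w \<otimes> inv (gcomm G h w) \<otimes> inv (inv w) \<in> U s0 (Suc a)"
    using U_conj[OF inv_closed[OF wc]] by blast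
  then show ?case using gcomm_inv_right[OF h wc] by simp
next
  case (eng h1 h2)
  have c: "h1 \<in> carrier G" "h2 \<in> carrier G" using eng U_carr by auto
  have "gcomm G h h1 \<otimes> (h1 \<otimes> gcomm G h h2 \<otimes> inv h1) \<in> U s0 (Suc a)"
    using subgroup.m_closed[OF U_sub eng(3) U_conj[OF c(1) eng(4)]] .
  then show ?case using gcomm_mult_right[OF h c] by simp
qed

lemma sq_gen: "w \<in> Ugens G C s0 a \<Longrightarrow> w \<otimes> w \<in> Ugens G C s0 (Suc a)"
  unfolding Ugens_def
proof clarify
  fix q s b assume q: "q \<in> C s" "s0 \<le> s" "b \<le> a" "s0 + a \<le> s + b"
  have qc: "q \<in> carrier G" using q C_carr by auto
  have "q [^] ((2::nat)^b) \<otimes> q [^] ((2::nat)^b) = q [^] ((2::nat)^Suc b)"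
    using nat_pow_mult[OF qc, of "2^b" "2^b"] by (simp add: mult_2)
  then show "\<exists>q' s' b'. q [^] ((2::nat)^b) \<otimes> q [^] ((2::nat)^b) = q' [^] ((2::nat)^b') \<and> q' \<in> C s' \<and> s0 \<le> s' \<and> b' \<le> Suc a \<and> s0 + Suc a \<le> s' + b'"
    using q by (intro exI[of _ q] exI[of _ s] exI[of _ "Suc b"]) auto
qed

lemma sq_U:
  assumes P: "\<And>b. b \<le> a \<Longrightarrow> Phi b" and v: "v \<in> U s0 a"
  shows "v \<otimes> v \<in> U s0 (Suc a)"
  using v
proof induction
  case one then show ?case by (simp only: l_one[OF one_closed]) (rule generate.one)
next
  case (incl w) then show ?case by (rule generate.incl[OF sq_gen])
next
  case (inv w)
  have wc: "w \<in> carrier G" using inv Ugens_carr by auto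
  have "inv (w \<otimes> w) \<in> U s0 (Suc a)" by (rule generate.inv[OF sq_gen[OF inv]])
  then show ?case using wc by (simp add: inv_mult_group)
next
  case (eng h1 h2)
  have c: "h1 \<in> carrier G" "h2 \<in> carrier G" using eng U_carr by auto
  have "gcomm G (inv h1) h2 \<in> U s0 (Suc a)" using comm_U[OF P _ eng(2)] c by simp
  then have "(h1 \<otimes> h1) \<otimes> gcomm G (inv h1) h2 \<otimes> (h2 \<otimes> h2) \<in> U s0 (Suc a)"
    using eng(3,4) subgroup.m_closed[OF U_sub] by blast
  then show ?case using sq_mult[OF c] by simp
qed

lemma Phi_all: "Phi a"
proof (induction a rule: less_induct)
  case (less n)
  show ?case
  proof (cases n)
    case 0
    show ?thesis unfolding Phi_def 0
    proof clarify
      fix t c g assume c: "c \<in> C t" and g: "g \<in> carrier G"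
      have cc: "c \<in> carrier G" using c C_carr by auto
      have e: "gcomm G g c = gcomm G g c [^] ((2::nat)^0)" using g cc by simp
      have ex: "\<exists>q s b. gcomm G g c = q [^] ((2::nat)^b) \<and> q \<in> C s \<and> Suc t \<le> s \<and> b \<le> 0 \<and> Suc t + 0 \<le> s + b"
        apply (rule exI[of _ "gcomm G g c"], rule exI[of _ "Suc t"], rule exI[of _ 0])
        using C_comm[OF g c] e by simp
      have "gcomm G g c \<in> Ugens G C (Suc t) 0" unfolding Ugens_def
        using ex by (simp only: mem_Collect_eq)
      then show "gcomm G g (c [^] ((2::nat)^0)) \<in> U (Suc t) 0" using cc by (simp add: generate.incl)
    qed
  next
    case (Suc a)
    have P: "\<And>b. b \<le> a \<Longrightarrow> Phi b" using less Suc by simp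
    show ?thesis unfolding Phi_def Suc
    proof clarify
      fix t c g assume c: "c \<in> C t" and g: "g \<in> carrier G"
      have cc: "c \<in> carrier G" using c C_carr by auto
      define p where "p = c [^] ((2::nat)^a)"
      have pc: "p \<in> carrier G" using cc p_def by simp
      define v where "v = gcomm G g p"
      have v: "v \<in> U (Suc t) a" using P[of a] c g unfolding Phi_def v_def p_def by blast
      have vc: "v \<in> carrier G" using v U_carr by blast
      have pp: "c [^] ((2::nat)^Suc a) = p \<otimes> p" using nat_pow_mult[OF cc, of "2^a" "2^a"] p_def by (simp add: mult_2)
      have "gcomm G p v \<otimes> (v \<otimes> v) \<in> U (Suc t) (Suc a)"
        using subgroup.m_closed[OF U_sub comm_U[OF P pc v] sq_U[OF P v]] .
      then have "v \<otimes> (gcomm G p v \<otimes> (v \<otimes> v)) \<otimes> inv v \<in> U (Suc t) (Suc a)"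
        using U_conj[OF vc] by blast
      then show "gcomm G g (c [^] ((2::nat)^Suc a)) \<in> U (Suc t) (Suc a)"
        unfolding pp gcomm_sq[OF g pc] v_def[symmetric] .
    qed
  qed
qed

end

context group begin

lemma rcomm_carr: "set L \<subseteq> carrier G \<Longrightarrow> rcomm G L \<in> carrier G"
proof (induction L)
  case Nil then show ?case by simp
next
  case (Cons x L) then show ?case by (cases L) auto
qed

lemma rcomm_cons: "L \<noteq> [] \<Longrightarrow> rcomm G (x # L) = gcomm G x (rcomm G L)"
  by (cases L) auto

lemma rcomm_conj: "g \<in> carrier G \<Longrightarrow> set L \<subseteq> carrier G \<Longrightarrow>
   g \<otimes> rcomm G L \<otimes> inv g = rcomm G (map (\<lambda>z. g \<otimes> z \<otimes> inv g) L)"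
proof (induction L)
  case Nil then show ?case by simp
next
  case (Cons x L)
  show ?case
  proof (cases "L = []")
    case True then show ?thesis by simp
  next
    case False
    have xc: "x \<in> carrier G" and Lc: "set L \<subseteq> carrier G" using Cons by auto
    have "g \<otimes> rcomm G (x # L) \<otimes> inv g = gcomm G (g \<otimes> x \<otimes> inv g) (g \<otimes> rcomm G L \<otimes> inv g)"
      unfolding rcomm_cons[OF False] by (rule gcomm_conj[OF Cons(2) xc rcomm_carr[OF Lc]])
    also have "\<dots> = gcomm G (g \<otimes> x \<otimes> inv g) (rcomm G (map (\<lambda>z. g \<otimes> z \<otimes> inv g) L))"
      by (simp only: Cons.IH[OF Cons(2) Lc])
    also have "\<dots> = rcomm G (map (\<lambda>z. g \<otimes> z \<otimes> inv g) (x # L))"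
    proof -
      have ne: "map (\<lambda>z. g \<otimes> z \<otimes> inv g) L \<noteq> []" using False by simp
      show ?thesis by (simp only: list.map(2) rcomm_cons[OF ne])
    qed
    finally show ?thesis .
  qed
qed

lemma A_conj: "A = {} \<or> A \<lhd> G \<Longrightarrow> g \<in> carrier G \<Longrightarrow> a \<in> A \<Longrightarrow> g \<otimes> a \<otimes> inv g \<in> A"
  by (metis empty_iff normal.inv_op_closed2)

lemma Egens_carr: "Egens G A l m \<subseteq> carrier G"
  unfolding Egens_def using rcomm_carr nat_pow_closed by blast

lemma Egens_conj:
  assumes A: "A = {} \<or> A \<lhd> G" and g: "g \<in> carrier G" and u: "u \<in> Egens G A l m"
  shows "g \<otimes> u \<otimes> inv g \<in> Egens G A l m"
proof -
  obtain xs k J where x: "u = rcomm G xs [^] ((2::nat) ^ (m - length xs - k))"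
    "l \<le> length xs" "length xs \<le> m" "set xs \<subseteq> carrier G" "k \<le> m - length xs"
    "J \<subseteq> {0..<length xs}" "card J = k" "\<forall>j\<in>J. xs ! j \<in> A"
    using u unfolding Egens_def by blast
  define f where "f = (\<lambda>z. g \<otimes> z \<otimes> inv g)"
  define ys where "ys = map f xs"
  have e: "g \<otimes> u \<otimes> inv g = rcomm G ys [^] ((2::nat) ^ (m - length ys - k))"
    using x(1) pow_conj[OF g rcomm_carr[OF x(4)]] rcomm_conj[OF g x(4)] unfolding ys_def f_def by simp
  have ys: "l \<le> length ys" "length ys \<le> m" "set ys \<subseteq> carrier G" "k \<le> m - length ys"
    "J \<subseteq> {0..<length ys}" "\<forall>j\<in>J. ys ! j \<in> A"
    using x g A_conj[OF A g] unfolding ys_def f_def by auto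
  show ?thesis unfolding Egens_def using e ys x(7) by blast
qed

end

context group begin

lemma key:
  assumes A: "A = {} \<or> A \<lhd> G" and i1: "1 \<le> i" "i \<le> m" and y: "y \<in> carrier G"
    and xs: "length xs = i" "set xs \<subseteq> carrier G" and k: "k \<le> m - i"
    and J: "J \<subseteq> {0..<i}" "card J = k" "\<forall>j\<in>J. xs ! j \<in> A"
  shows "Egrp G A (i + 1) (m + 1) #> gcomm G (rcomm G xs [^] ((2::nat) ^ (m - i - k))) y
       = Egrp G A (i + 1) (m + 1) #> (gcomm G (rcomm G xs) y [^] ((2::nat) ^ (m - i - k)))"
proof -
  define e where "e = m - i - k"
  define N where "N = Egrp G A (i + 1) (m + 1)"
  have Nsub: "subgroup N G" unfolding N_def Egrp_def by (rule generate_is_subgroup[OF Egens_carr])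
  have Nconj: "\<And>g u. g \<in> carrier G \<Longrightarrow> u \<in> N \<Longrightarrow> g \<otimes> u \<otimes> inv g \<in> N"
    unfolding N_def Egrp_def by (rule gen_conj[OF Egens_carr Egens_conj[OF A]])
  define Cf where "Cf = (\<lambda>s. {rcomm G (zs @ ws) | zs ws. length zs = s \<and> set zs \<subseteq> carrier G \<and>
      length ws = i \<and> set ws \<subseteq> carrier G \<and> (\<forall>j\<in>J. ws ! j \<in> A)})"
  have C1: "\<And>s. Cf s \<subseteq> carrier G"
    unfolding Cf_def using rcomm_carr by fastforce
  have C2: "\<And>g c s. g \<in> carrier G \<Longrightarrow> c \<in> Cf s \<Longrightarrow> g \<otimes> c \<otimes> inv g \<in> Cf s"
  proof -
    fix g c s assume g: "g \<in> carrier G" and c: "c \<in> Cf s"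
    obtain zs ws where z: "c = rcomm G (zs @ ws)" "length zs = s" "set zs \<subseteq> carrier G"
      "length ws = i" "set ws \<subseteq> carrier G" "\<forall>j\<in>J. ws ! j \<in> A"
      using c unfolding Cf_def by blast
    define f where "f = (\<lambda>z. g \<otimes> z \<otimes> inv g)"
    have "g \<otimes> c \<otimes> inv g = rcomm G (map f zs @ map f ws)"
      using rcomm_conj[OF g, of "zs @ ws"] z unfolding f_def by simp
    moreover have "\<forall>j\<in>J. map f ws ! j \<in> A" using z J(1) A_conj[OF A g] unfolding f_def by auto
    moreover have "set (map f zs) \<subseteq> carrier G" "set (map f ws) \<subseteq> carrier G"
      using z g unfolding f_def by auto
    ultimately show "g \<otimes> c \<otimes> inv g \<in> Cf s" unfolding Cf_def using z
      by (intro CollectI exI[of _ "map f zs"] exI[of _ "map f ws"]) simp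
  qed
  have C3: "\<And>g c s. g \<in> carrier G \<Longrightarrow> c \<in> Cf s \<Longrightarrow> gcomm G g c \<in> Cf (Suc s)"
  proof -
    fix g c s assume g: "g \<in> carrier G" and c: "c \<in> Cf s"
    obtain zs ws where z: "c = rcomm G (zs @ ws)" "length zs = s" "set zs \<subseteq> carrier G"
      "length ws = i" "set ws \<subseteq> carrier G" "\<forall>j\<in>J. ws ! j \<in> A"
      using c unfolding Cf_def by blast
    have ne: "zs @ ws \<noteq> []" using z(4) i1 by auto
    have "gcomm G g c = rcomm G ((g # zs) @ ws)" using rcomm_cons[OF ne] z(1) by simp
    then show "gcomm G g c \<in> Cf (Suc s)" unfolding Cf_def using z g
      by (intro CollectI exI[of _ "g # zs"] exI[of _ ws]) simp
  qed
  interpret cf: cfam G Cf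
    by (intro cfam.intro is_group cfam_axioms.intro C1 C2 C3)
  have E2: "\<And>s q. 1 \<le> s \<Longrightarrow> s \<le> e + 1 \<Longrightarrow> q \<in> Cf s \<Longrightarrow> q [^] ((2::nat) ^ (e + 1 - s)) \<in> N"
  proof -
    fix s q assume s: "1 \<le> s" "s \<le> e + 1" and q: "q \<in> Cf s"
    obtain zs ws where z: "q = rcomm G (zs @ ws)" "length zs = s" "set zs \<subseteq> carrier G"
      "length ws = i" "set ws \<subseteq> carrier G" "\<forall>j\<in>J. ws ! j \<in> A"
      using q unfolding Cf_def by blast
    define L where "L = zs @ ws"
    define J' where "J' = (\<lambda>j. j + s) ` J"
    have len: "length L = s + i" using z unfolding L_def by simp
    have ex: "m + 1 - length L - k = e + 1 - s" using len e_def k s i1 by simp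
    have L1: "i + 1 \<le> length L" "length L \<le> m + 1" "set L \<subseteq> carrier G" "k \<le> m + 1 - length L"
      using len s e_def k z i1 unfolding L_def by auto
    have J'1: "J' \<subseteq> {0..<length L}" using J(1) len unfolding J'_def by auto
    have J'2: "card J' = k" unfolding J'_def using J(2) by (simp add: card_image inj_on_def)
    have J'3: "\<forall>j\<in>J'. L ! j \<in> A" using z unfolding J'_def L_def by (auto simp: nth_append)
    have "q [^] ((2::nat) ^ (e + 1 - s)) \<in> Egens G A (i + 1) (m + 1)"
      unfolding Egens_def
      apply (rule CollectI, rule exI[of _ L], rule exI[of _ k])
      using z(1) ex L1 J'1 J'2 J'3 unfolding L_def by auto
    then show "q [^] ((2::nat) ^ (e + 1 - s)) \<in> N" unfolding N_def Egrp_def by (rule generate.incl)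
  qed
  have E3: "\<And>n q. q \<in> Cf (e + 1 + n) \<Longrightarrow> q \<in> N"
  proof -
    fix n show "\<And>q. q \<in> Cf (e + 1 + n) \<Longrightarrow> q \<in> N"
    proof (induction n)
      case 0
      have qc: "q \<in> carrier G" using 0 C1 by blast
      have "q [^] ((2::nat) ^ (e + 1 - (e + 1 + 0))) \<in> N" using E2[OF _ _ 0] by simp
      then show ?case using qc by simp
    next
      case (Suc n)
      obtain zs ws where z: "q = rcomm G (zs @ ws)" "length zs = e + 1 + Suc n" "set zs \<subseteq> carrier G"
        "length ws = i" "set ws \<subseteq> carrier G" "\<forall>j\<in>J. ws ! j \<in> A"
        using Suc.prems unfolding Cf_def by blast
      obtain z0 zs' where zz: "zs = z0 # zs'" using z(2) by (cases zs) auto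
      have ne: "zs' @ ws \<noteq> []" using z(4) i1 by auto
      have w: "rcomm G (zs' @ ws) \<in> Cf (e + 1 + n)" unfolding Cf_def using z zz
        by (intro CollectI exI[of _ zs'] exI[of _ ws]) simp
      have wN: "rcomm G (zs' @ ws) \<in> N" using Suc.IH[OF w] .
      have z0: "z0 \<in> carrier G" using z zz by simp
      have "z0 \<otimes> rcomm G (zs' @ ws) \<otimes> inv z0 \<otimes> inv (rcomm G (zs' @ ws)) \<in> N"
        using subgroup.m_closed[OF Nsub Nconj[OF z0 wN] subgroup.m_inv_closed[OF Nsub wN]] .
      moreover have "q = z0 \<otimes> rcomm G (zs' @ ws) \<otimes> inv z0 \<otimes> inv (rcomm G (zs' @ ws))"
        using z(1) zz rcomm_cons[OF ne, of z0] by (simp add: gcomm_def)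
      ultimately show ?case by simp
    qed
  qed
  have E4: "\<And>s q b. 1 \<le> s \<Longrightarrow> q \<in> Cf s \<Longrightarrow> e + 1 \<le> s + b \<Longrightarrow> q [^] ((2::nat) ^ b) \<in> N"
  proof -
    fix s q b assume s: "1 \<le> s" and q: "q \<in> Cf s" and b: "e + 1 \<le> s + b"
    have qc: "q \<in> carrier G" using q C1 by blast
    show "q [^] ((2::nat) ^ b) \<in> N"
    proof (cases "s \<le> e + 1")
      case True
      have b2: "b = (e + 1 - s) + (b - (e + 1 - s))" using b True by simp
      have "(q [^] ((2::nat) ^ (e + 1 - s))) [^] ((2::nat) ^ (b - (e + 1 - s))) \<in> N"
        using subgroup_pow_closed[OF Nsub E2[OF s True q]] .
      moreover have "(q [^] ((2::nat) ^ (e + 1 - s))) [^] ((2::nat) ^ (b - (e + 1 - s))) = q [^] ((2::nat) ^ b)"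
        using nat_pow_pow[OF qc] b2 by (metis power_add)
      ultimately show ?thesis by simp
    next
      case False
      have "s = e + 1 + (s - (e + 1))" using False by simp
      then have "q \<in> Cf (e + 1 + (s - (e + 1)))" using q by simp
      then have "q \<in> N" by (rule E3)
      then show ?thesis by (rule subgroup_pow_closed[OF Nsub])
    qed
  qed
  have E5: "cf.U 1 e \<subseteq> N"
  proof (rule generate_subgroup_incl[OF _ Nsub])
    show "Ugens G Cf 1 e \<subseteq> N" unfolding Ugens_def using E4 by auto
  qed
  define x where "x = rcomm G xs"
  have xc: "x \<in> carrier G" using rcomm_carr[OF xs(2)] x_def by simp
  have xC: "x \<in> Cf 0" unfolding Cf_def x_def using xs J
    by (intro CollectI exI[of _ "[]"] exI[of _ xs]) simp
  have "gcomm G y (x [^] ((2::nat) ^ e)) \<in> cf.U (Suc 0) e"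
    using cf.Phi_all[of e] xC y unfolding cf.Phi_def by blast
  then have g1: "gcomm G y (x [^] ((2::nat) ^ e)) \<in> N" using E5 by auto
  have g1': "gcomm G (x [^] ((2::nat) ^ e)) y \<in> N"
    using subgroup.m_inv_closed[OF Nsub g1] gcomm_inv[OF y nat_pow_closed[OF xc]] by simp
  have ne: "xs \<noteq> []" using xs(1) i1 by auto
  have yC: "gcomm G y x \<in> Cf 1" unfolding Cf_def x_def using xs J y rcomm_cons[OF ne, of y]
    by (intro CollectI exI[of _ "[y]"] exI[of _ xs]) simp
  have "gcomm G y x [^] ((2::nat) ^ e) \<in> N" using E4[OF _ yC] by simp
  then have "inv (gcomm G y x [^] ((2::nat) ^ e)) \<in> N" by (rule subgroup.m_inv_closed[OF Nsub])
  then have g2: "gcomm G x y [^] ((2::nat) ^ e) \<in> N"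
    using nat_pow_inv[of "gcomm G y x"] gcomm_inv[OF y xc] xc y by simp
  have "N #> gcomm G (x [^] ((2::nat) ^ e)) y = N" by (rule coset_join2[OF _ Nsub g1']) (simp add: xc y)
  moreover have "N #> (gcomm G x y [^] ((2::nat) ^ e)) = N" by (rule coset_join2[OF _ Nsub g2]) (simp add: xc y)
  ultimately show ?thesis unfolding N_def e_def x_def by simp
qed

end

theorem lemma5p7:
  fixes G :: "('a, 'b) monoid_scheme" and A :: "'a set"
    and xs :: "'a list" and y :: 'a and m i k :: nat and J :: "nat set"
  assumes "group G"
    and "A = {} \<or> A \<lhd> G"
    and "1 \<le> m" and "1 \<le> i" and "i \<le> m"
    and "y \<in> carrier G"
    and "length xs = i" and "set xs \<subseteq> carrier G"
    and "k \<le> m - i"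
    and "J \<subseteq> {0..<i}" and "card J = k" and "\<forall>j\<in>J. xs ! j \<in> A"
  shows "(Egrp G A (i + 1) (m + 1) #>\<^bsub>G\<^esub>
           gcomm G (rcomm G xs [^]\<^bsub>G\<^esub> ((2::nat) ^ (m - i - k))) y
       = Egrp G A (i + 1) (m + 1) #>\<^bsub>G\<^esub>
           (gcomm G (rcomm G xs) y [^]\<^bsub>G\<^esub> ((2::nat) ^ (m - i - k)))) \<and>
         (Egrp G {} (i + 1) (m + 1) #>\<^bsub>G\<^esub>
           gcomm G (rcomm G xs [^]\<^bsub>G\<^esub> ((2::nat) ^ (m - i))) y
       = Egrp G {} (i + 1) (m + 1) #>\<^bsub>G\<^esub>
           (gcomm G (rcomm G xs) y [^]\<^bsub>G\<^esub> ((2::nat) ^ (m - i))))"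
proof
  show "Egrp G A (i + 1) (m + 1) #>\<^bsub>G\<^esub>
           gcomm G (rcomm G xs [^]\<^bsub>G\<^esub> ((2::nat) ^ (m - i - k))) y
       = Egrp G A (i + 1) (m + 1) #>\<^bsub>G\<^esub>
           (gcomm G (rcomm G xs) y [^]\<^bsub>G\<^esub> ((2::nat) ^ (m - i - k)))"
    by (rule group.key[OF assms(1,2,4,5,6,7,8,9,10,11,12)])
  have "Egrp G {} (i + 1) (m + 1) #>\<^bsub>G\<^esub>
           gcomm G (rcomm G xs [^]\<^bsub>G\<^esub> ((2::nat) ^ (m - i - 0))) y
       = Egrp G {} (i + 1) (m + 1) #>\<^bsub>G\<^esub>
           (gcomm G (rcomm G xs) y [^]\<^bsub>G\<^esub> ((2::nat) ^ (m - i - 0)))"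
    by (rule group.key[OF assms(1) _ assms(4,5,6,7,8)]) auto
  then show "Egrp G {} (i + 1) (m + 1) #>\<^bsub>G\<^esub>
           gcomm G (rcomm G xs [^]\<^bsub>G\<^esub> ((2::nat) ^ (m - i))) y
       = Egrp G {} (i + 1) (m + 1) #>\<^bsub>G\<^esub>
           (gcomm G (rcomm G xs) y [^]\<^bsub>G\<^esub> ((2::nat) ^ (m - i)))" by simp
qed

end
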